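(* Let $\alpha>0$ and let $f_1,f_2:\Delta^1\to\mathbb R$ be measurable functions, where $\Delta^1=\{(a,b)\in[0,1]^2: a+b=1\}$, such that (1) $f_i(0,1)=f_i(1,0)=0$ for $i=1,2$; and (2) for all $(p_0,p_1,p_2)\in\Delta^2$, $(1-p_2)^\alpha f_1\!\left(\tfrac{p_0}{1-p_2},\tfrac{p_1}{1-p_2}\right)-f_1(1-p_1,p_1)=(1-p_1)^\alpha f_2\!\left(\tfrac{p_0}{1-p_1},\tfrac{p_2}{1-p_1}\right)-f_2(1-p_2,p_2)$, with the convention that a term $(1-p_i)^\alpha f_j(\cdot)$ is $0$ when $p_i=1$. Then $f_1=f_2$ and there exists $\lambda\in\mathbb R$ such that $f_1(p,1-p)=\lambda s_\alpha(p)$ for all $p\in[0,1]$.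
   Context: $\Delta^2=\{(p_0,p_1,p_2)\in[0,1]^3:p_0+p_1+p_2=1\}$. $s_1(p)=-p\log p-(1-p)\log(1-p)$ (with $0\log0=0$) and, for $\alpha\ne1$, $s_\alpha(p)=\frac1{1-\alpha}(p^\alpha+(1-p)^\alpha-1)$, for $p\in[0,1]$. *)

theory Defs
  imports "HOL-Analysis.Analysis"
begin

definition simplex1 :: "(real \<times> real) set" where
  "simplex1 = {(a, b). 0 \<le> a \<and> a \<le> 1 \<and> 0 \<le> b \<and> b \<le> 1 \<and> a + b = 1}"

definition simplex2 :: "(real \<times> real \<times> real) set" where
  "simplex2 = {(p0, p1, p2). 0 \<le> p0 \<and> p0 \<le> 1 \<and> 0 \<le> p1 \<and> p1 \<le> 1 \<and>
                 0 \<le> p2 \<and> p2 \<le> 1 \<and> p0 + p1 + p2 = 1}"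

definition xlogx :: "real \<Rightarrow> real" where
  "xlogx x = (if x = 0 then 0 else x * ln x)"

definition s_alpha :: "real \<Rightarrow> real \<Rightarrow> real" where
  "s_alpha \<alpha> p = (if \<alpha> = 1 then - xlogx p - xlogx (1 - p)
                    else (p powr \<alpha> + (1 - p) powr \<alpha> - 1) / (1 - \<alpha>))"

definition scaled_term :: "real \<Rightarrow> (real \<times> real \<Rightarrow> real) \<Rightarrow> real \<Rightarrow> real \<Rightarrow> real \<Rightarrow> real" where
  "scaled_term \<alpha> f q x y = (if q = 1 then 0 else (1 - q) powr \<alpha> * f (x / (1 - q), y / (1 - q)))"

end

theory Submission
  imports Defs
begin

definition Gf :: "real \<Rightarrow> (real \<Rightarrow> real) \<Rightarrow> real \<Rightarrow> real \<Rightarrow> real" where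
  "Gf a H u v = (if u + v > 0 then (u + v) powr a * H (v / (u + v)) else 0)"

locale FE =
  fixes \<alpha> :: real and H :: "real \<Rightarrow> real"
  assumes apos: "\<alpha> > 0"
    and Hmeas: "H \<in> borel_measurable borel"
    and H0: "H 0 = 0" and H1: "H 1 = 0"
    and eq: "\<And>p0 p1 p2. 0 \<le> p0 \<Longrightarrow> 0 \<le> p1 \<Longrightarrow> 0 \<le> p2 \<Longrightarrow> p0 + p1 + p2 = 1 \<Longrightarrow>
       Gf \<alpha> H p0 p1 - Gf \<alpha> H (p0 + p2) p1 = Gf \<alpha> H p2 p0 - Gf \<alpha> H p2 (p0 + p1)"
begin

abbreviation Gc where "Gc \<equiv> Gf \<alpha> H"

lemma G_homog:
  assumes "t > 0" "u \<ge> 0" "v \<ge> 0"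
  shows "Gc (t * u) (t * v) = t powr \<alpha> * Gc u v"
proof (cases "u + v > 0")
  case True
  have a: "t * u + t * v = t * (u+v)" by (simp add: algebra_simps)
  have "t * u + t * v > 0" using True assms by (simp add: a)
  moreover have "t * v / (t * u+t * v) = v/(u+v)" using assms by (simp add: a)
  moreover have "(t * u+t * v) powr \<alpha> = t powr \<alpha> * (u+v) powr \<alpha>"
    using assms True by (simp add: a powr_mult)
  ultimately show ?thesis using True by (simp add: Gf_def)
next
  case False
  then have "u = 0" "v = 0" using assms by auto
  then show ?thesis by (simp add: Gf_def)
qed

lemma G_zero1: "v \<ge> 0 \<Longrightarrow> Gc 0 v = 0"
  by (auto simp: Gf_def H1)

lemma G_zero2: "u \<ge> 0 \<Longrightarrow> Gc u 0 = 0"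
  by (auto simp: Gf_def H0)

lemma G_sum1: "u \<ge> 0 \<Longrightarrow> v \<ge> 0 \<Longrightarrow> u + v = 1 \<Longrightarrow> Gc u v = H v"
  by (simp add: Gf_def)

lemma cocycle:
  assumes "u \<ge> 0" "v \<ge> 0" "w \<ge> 0"
  shows "Gc u v + Gc (u+v) w = Gc u (v+w) + Gc v w"
proof (cases "u + v + w = 0")
  case True
  then have "u = 0" "v = 0" "w = 0" using assms by auto
  then show ?thesis by (simp add: Gf_def)
next
  case False
  define S where "S = u + v + w"
  have S: "S > 0" using False assms S_def by auto
  have e: "Gc (v/S) (w/S) - Gc (v/S + u/S) (w/S) = Gc (u/S) (v/S) - Gc (u/S) (v/S + w/S)"
  proof -
    have "v/S + w/S + u/S = (v+w+u)/S" by (simp add: add_divide_distrib)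
    also have "\<dots> = 1" using S unfolding S_def by (simp add: algebra_simps)
    finally have "v/S + w/S + u/S = 1" .
    then show ?thesis using eq[of "v/S" "w/S" "u/S"] assms S by simp
  qed
  have h: "Gc a b = S powr \<alpha> * Gc (a/S) (b/S)" if "a \<ge> 0" "b \<ge> 0" for a b
  proof -
    have "Gc (S * (a/S)) (S * (b/S)) = S powr \<alpha> * Gc (a/S) (b/S)"
      by (rule G_homog) (use S that in auto)
    then show ?thesis using S by simp
  qed
  have e1: "Gc v w = S powr \<alpha> * Gc (v/S) (w/S)" using h assms by simp
  have e2: "Gc (v+u) w = S powr \<alpha> * Gc (v/S + u/S) (w/S)" using h[of "v+u" w] assms by (simp add: add_divide_distrib)
  have e3: "Gc u v = S powr \<alpha> * Gc (u/S) (v/S)" using h assms by simp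
  have e4: "Gc u (v+w) = S powr \<alpha> * Gc (u/S) (v/S + w/S)" using h[of u "v+w"] assms by (simp add: add_divide_distrib)
  have "Gc v w - Gc (v+u) w = Gc u v - Gc u (v+w)"
    unfolding e1 e2 e3 e4 using e by (metis right_diff_distrib)
  then show ?thesis by (simp add: algebra_simps)
qed

end


lemma borel_sets_lebesgue: "S \<in> sets borel \<Longrightarrow> S \<in> sets lebesgue"
  by (metis sets_completionI_sets sets_lborel)

lemma preimage_measure:
  fixes g g' :: "real \<Rightarrow> real"
  assumes B: "B \<in> sets borel" "bounded B"
    and gm: "g \<in> borel_measurable borel"
    and der: "\<And>y. y \<in> {a..b} \<Longrightarrow> (g has_real_derivative g' y) (at y)"
    and m: "m > 0" "\<And>y. y \<in> {a..b} \<Longrightarrow> m \<le> \<bar>g' y\<bar>"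
    and inj: "inj_on g {a..b}"
  shows "measure lebesgue {y\<in>{a..b}. g y \<in> B} \<le> measure lebesgue B / m"
proof -
  define S where "S = {y\<in>{a..b}. g y \<in> B}"
  have Sb: "S \<in> sets borel" unfolding S_def using gm B by measurable
  have Sl: "S \<in> lmeasurable"
  proof (rule bounded_set_imp_lmeasurable)
    show "bounded S" by (rule bounded_subset[of "{a..b}"]) (auto simp: S_def)
    show "S \<in> sets lebesgue" using Sb by (rule borel_sets_lebesgue)
  qed
  have cont: "continuous_on {a..b} g"
    using der by (meson DERIV_isCont continuous_at_imp_continuous_on)
  have gS: "g ` S = g ` {a..b} \<inter> B" unfolding S_def by auto
  have Bl: "B \<in> lmeasurable" using B by (simp add: borel_sets_lebesgue bounded_set_imp_lmeasurable)
  have gSb: "g ` S \<in> sets borel"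
    unfolding gS using B compact_continuous_image[OF cont compact_Icc]
    by (simp add: borel_closed compact_imp_closed sets.Int)
  have gSl: "g ` S \<in> lmeasurable"
    by (rule bounded_set_imp_lmeasurable) (use gSb borel_sets_lebesgue B gS bounded_subset in auto)
  have ci: "(\<lambda>x. \<bar>g' x\<bar> * 1) absolutely_integrable_on S \<and>
           integral S (\<lambda>x. \<bar>g' x\<bar> * 1) = measure lebesgue (g ` S)
     \<longleftrightarrow> (\<lambda>x. 1::real) absolutely_integrable_on (g ` S) \<and> integral (g ` S) (\<lambda>x. 1::real) = measure lebesgue (g ` S)"
    by (rule has_absolute_integral_change_of_variables_1'[where f="\<lambda>_. 1"])
       (use Sl der inj in \<open>auto simp: S_def intro: has_field_derivative_at_within inj_on_subset\<close>)
  have r: "(\<lambda>x. 1::real) absolutely_integrable_on (g ` S) \<and> integral (g ` S) (\<lambda>x. 1) = measure lebesgue (g ` S)"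
    using gSl by (simp add: absolutely_integrable_on_iff_nonneg lmeasurable_iff_integrable_on lmeasure_integral)
  have i1: "(\<lambda>x. \<bar>g' x\<bar>) integrable_on S" and i2: "integral S (\<lambda>x. \<bar>g' x\<bar>) = measure lebesgue (g ` S)"
    using ci r by (auto dest: absolutely_integrable_on_def[THEN iffD1])
  have "m * measure lebesgue S = integral S (\<lambda>x. m)"
    using Sl integral_mult_right[of S m "\<lambda>x. 1::real"] by (simp add: lmeasure_integral)
  also have "\<dots> \<le> integral S (\<lambda>x. \<bar>g' x\<bar>)"
    by (rule integral_le) (use Sl i1 m in \<open>auto simp: S_def integrable_on_const\<close>)
  also have "\<dots> \<le> measure lebesgue B"
    unfolding i2 using Bl gS gSl by (intro measure_mono_fmeasurable) auto
  finally show ?thesis using m unfolding S_def by (simp add: field_simps mult.commute)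
qed


context FE
begin

lemmas Hmeas' [measurable] = Hmeas

lemma bad_small:
  assumes "e > 0"
  shows "\<exists>n::nat. measure lebesgue {z\<in>{0..1}. real n < \<bar>H z\<bar>} < e"
proof -
  define A where "A n = {z\<in>{0..1::real}. real n < \<bar>H z\<bar>}" for n :: nat
  have Ab: "A n \<in> sets borel" for n unfolding A_def by measurable
  have r: "range A \<subseteq> sets lebesgue" using Ab borel_sets_lebesgue by auto
  have d: "decseq A" unfolding decseq_def A_def by auto
  have f: "emeasure lebesgue (A n) \<noteq> \<infinity>" for n
  proof -
    have "A n \<in> lmeasurable"
      by (rule bounded_set_imp_lmeasurable) (use Ab borel_sets_lebesgue in \<open>auto simp: A_def intro: bounded_subset[of "{0..1}"]\<close>)
    then show ?thesis by (metis fmeasurableD2 infinity_ennreal_def)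
  qed
  have e: "(\<Inter>i. A i) = {}"
  proof -
    { fix z assume "z \<in> (\<Inter>i. A i)"
      obtain n :: nat where "\<bar>H z\<bar> < real n" using reals_Archimedean2 by blast
      moreover have "z \<in> A n" using \<open>z \<in> (\<Inter>i. A i)\<close> by auto
      ultimately have False unfolding A_def by auto }
    then show ?thesis by auto
  qed
  have "(\<lambda>n. measure lebesgue (A n)) \<longlonglongrightarrow> 0"
    using Lim_measure_decseq[OF r d f] e by simp
  then have "eventually (\<lambda>n. measure lebesgue (A n) < e) sequentially"
    using assms by (rule order_tendstoD)
  then obtain n where "measure lebesgue (A n) < e" by (meson eventually_sequentially order.refl)
  then show ?thesis unfolding A_def by blast
qed

lemma H_identity:
  assumes "0 \<le> x" "0 \<le> y" "x + y \<le> 1" "y < 1" "x < 1"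
  shows "H x = (1-y) powr \<alpha> * H (x/(1-y)) - (1-x) powr \<alpha> * H ((1-x-y)/(1-x)) + H (1-y)"
proof -
  have e: "Gc (1-x-y) x - Gc (1-x-y+y) x = Gc y (1-x-y) - Gc y (1-x-y+x)"
    by (rule eq) (use assms in auto)
  have a1: "Gc (1-x-y) x = (1-y) powr \<alpha> * H (x/(1-y))"
    using assms by (simp add: Gf_def)
  have a2: "Gc (1-x-y+y) x = H x" using assms by (simp add: Gf_def)
  have a3: "Gc y (1-x-y) = (1-x) powr \<alpha> * H ((1-x-y)/(1-x))"
    using assms by (simp add: Gf_def)
  have a4: "Gc y (1-x-y+x) = H (1-y)" using assms by (simp add: Gf_def)
  show ?thesis using e unfolding a1 a2 a3 a4 by linarith
qed

lemma local_bound: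
  assumes a: "0 < a" "a \<le> b" "b < 1"
  shows "\<exists>M. \<forall>x\<in>{a..b}. \<bar>H x\<bar> \<le> M"
proof -
  define L where "L = 1 - b"
  have L: "L > 0" using a by (simp add: L_def)
  define K where "K = 1/a + 2"
  have K: "K > 0" proof - have "1/a > 0" using a by simp then show ?thesis unfolding K_def by linarith qed
  obtain n :: nat where n: "measure lebesgue {z\<in>{0..1}. real n < \<bar>H z\<bar>} < L / K"
    using bad_small[of "L/K"] L K by auto
  define B where "B = {z\<in>{0..1::real}. real n < \<bar>H z\<bar>}"
  have Bb: "B \<in> sets borel" unfolding B_def by measurable
  have Bbd: "bounded B" by (rule bounded_subset[of "{0..1}"]) (auto simp: B_def)
  have Bl: "B \<in> lmeasurable" using Bb Bbd borel_sets_lebesgue bounded_set_imp_lmeasurable by blast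
  have mB: "measure lebesgue B * K < L" using n K unfolding B_def by (simp add: field_simps)
  have "\<bar>H x\<bar> \<le> 3 * real n" if x: "x \<in> {a..b}" for x
  proof -
    have x0: "0 < x" "x \<le> b" "x < 1" using x a by auto
    define Y1 where "Y1 = {y\<in>{0..L}. x/(1-y) \<in> B}"
    define Y2 where "Y2 = {y\<in>{0..L}. (1-x-y)/(1-x) \<in> B}"
    define Y3 where "Y3 = {y\<in>{0..L}. 1-y \<in> B}"
    have Lb: "L < 1" using a L_def by simp
    have m1: "measure lebesgue Y1 \<le> measure lebesgue B / a"
      unfolding Y1_def
    proof (rule preimage_measure[OF Bb Bbd, where g' = "\<lambda>y. x/(1-y)^2"])
      show "(\<lambda>y. x/(1-y)) \<in> borel_measurable borel" by measurable
      show "((\<lambda>y. x/(1-y)) has_real_derivative x/(1-y)^2) (at y)" if "y \<in> {0..L}" for y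
        using that Lb by (auto intro!: derivative_eq_intros simp: power2_eq_square)
      show "0 < a" using a by simp
      show "a \<le> \<bar>x/(1-y)^2\<bar>" if "y \<in> {0..L}" for y
      proof -
        have "0 < (1-y)^2" "(1-y)^2 \<le> 1" using that Lb by (auto simp: power_le_one)
        then have "x \<le> x/(1-y)^2" using x0 by (simp add: le_divide_eq)
        then show ?thesis using x a by auto
      qed
      show "inj_on (\<lambda>y. x/(1-y)) {0..L}"
        using x0 Lb by (auto simp: inj_on_def field_simps)
    qed
    have m2: "measure lebesgue Y2 \<le> measure lebesgue B / 1"
      unfolding Y2_def
    proof (rule preimage_measure[OF Bb Bbd, where g' = "\<lambda>y. -1/(1-x)"])
      show "(\<lambda>y. (1-x-y)/(1-x)) \<in> borel_measurable borel" by measurable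
      show "((\<lambda>y. (1-x-y)/(1-x)) has_real_derivative -1/(1-x)) (at y)" if "y \<in> {0..L}" for y
      proof -
        have "((\<lambda>y. 1-x-y) has_real_derivative -1) (at y)"
          by (auto intro!: derivative_eq_intros)
        then show ?thesis by (rule DERIV_cdivide)
      qed
      show "1 \<le> \<bar>-1/(1-x)\<bar>" if "y \<in> {0..L}" for y
        using x0 by (simp add: abs_div_pos le_divide_eq)
      show "inj_on (\<lambda>y. (1-x-y)/(1-x)) {0..L}"
        using x0 by (auto simp: inj_on_def field_simps)
    qed simp
    have m3: "measure lebesgue Y3 \<le> measure lebesgue B / 1"
      unfolding Y3_def
    proof (rule preimage_measure[OF Bb Bbd, where g' = "\<lambda>y. -1"])
      show "(\<lambda>y::real. 1-y) \<in> borel_measurable borel"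
        by measurable
      show "((\<lambda>y. 1-y) has_real_derivative -1) (at y)" for y
        by (auto intro!: derivative_eq_intros)
      show "inj_on (\<lambda>y. 1-y) {0..L}" by (auto simp: inj_on_def)
    qed simp_all
    have Yb: "Y1 \<in> sets borel" "Y2 \<in> sets borel" "Y3 \<in> sets borel"
      unfolding Y1_def Y2_def Y3_def using Bb by measurable
    have Yl: "Y1 \<in> sets lebesgue" "Y2 \<in> sets lebesgue" "Y3 \<in> sets lebesgue"
      using Yb borel_sets_lebesgue by auto
    have Ybd: "Y1 \<union> Y2 \<union> Y3 \<subseteq> {0..L}" unfolding Y1_def Y2_def Y3_def by auto
    have Ul: "Y1 \<union> Y2 \<union> Y3 \<in> lmeasurable"
      by (rule bounded_set_imp_lmeasurable) (use Ybd Yl in \<open>auto intro: bounded_subset[of "{0..L}"]\<close>)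
    have "measure lebesgue (Y1 \<union> Y2 \<union> Y3) \<le> measure lebesgue (Y1 \<union> Y2) + measure lebesgue Y3"
      using Yl by (intro measure_Un_le) auto
    also have "\<dots> \<le> measure lebesgue Y1 + measure lebesgue Y2 + measure lebesgue Y3"
      using Yl measure_Un_le[of Y1 lebesgue Y2] by auto
    also have "\<dots> \<le> measure lebesgue B * K"
      using m1 m2 m3 by (simp add: K_def field_simps)
    finally have mU: "measure lebesgue (Y1 \<union> Y2 \<union> Y3) < L" using mB by linarith
    have "\<exists>y\<in>{0..L}. y \<notin> Y1 \<union> Y2 \<union> Y3"
    proof (rule ccontr)
      assume "\<not> ?thesis"
      then have "{0..L} \<subseteq> Y1 \<union> Y2 \<union> Y3" by auto
      then have "measure lebesgue {0..L} \<le> measure lebesgue (Y1 \<union> Y2 \<union> Y3)"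
        using Ul by (intro measure_mono_fmeasurable) auto
      then show False using mU L by simp
    qed
    then obtain y where y: "y \<in> {0..L}" "y \<notin> Y1" "y \<notin> Y2" "y \<notin> Y3" by auto
    have y0: "0 \<le> y" "y \<le> L" "x + y \<le> 1" using y x0 L_def by auto
    have r1: "x/(1-y) \<in> {0..1}" using y0 x0 Lb by (auto simp: divide_le_eq_1)
    have r2: "(1-x-y)/(1-x) \<in> {0..1}" using y0 x0 by (auto simp: divide_le_eq_1)
    have r3: "1-y \<in> {0..1}" using y0 Lb by auto
    have b1: "\<bar>H (x/(1-y))\<bar> \<le> n" using y r1 by (auto simp: Y1_def B_def)
    have b2: "\<bar>H ((1-x-y)/(1-x))\<bar> \<le> n" using y r2 by (auto simp: Y2_def B_def)
    have b3: "\<bar>H (1-y)\<bar> \<le> n" using y r3 by (auto simp: Y3_def B_def)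
    have p1: "0 \<le> (1-y) powr \<alpha>" "(1-y) powr \<alpha> \<le> 1" using y0 Lb apos by (auto intro: powr_le1)
    have p2: "0 \<le> (1-x) powr \<alpha>" "(1-x) powr \<alpha> \<le> 1" using x0 apos by (auto intro: powr_le1)
    have "\<bar>(1-y) powr \<alpha> * H (x/(1-y))\<bar> \<le> n"
      using b1 p1 mult_left_le_one_le[of "\<bar>H (x/(1-y))\<bar>" "(1-y) powr \<alpha>"] by (simp add: abs_mult)
    moreover have "\<bar>(1-x) powr \<alpha> * H ((1-x-y)/(1-x))\<bar> \<le> n"
      using b2 p2 mult_left_le_one_le[of "\<bar>H ((1-x-y)/(1-x))\<bar>" "(1-x) powr \<alpha>"] by (simp add: abs_mult)
    ultimately show ?thesis
      using H_identity[of x y] y0 x0 Lb b3 by linarith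
  qed
  then show ?thesis by blast
qed

end


lemma bm_lebesgue_on:
  fixes f :: "real \<Rightarrow> real"
  assumes "f \<in> borel_measurable borel"
  shows "f \<in> borel_measurable (lebesgue_on S)"
proof -
  have "f \<in> borel_measurable lborel" using assms by (simp only: measurable_lborel2)
  then have "f \<in> borel_measurable lebesgue" by (rule measurable_completion)
  then show ?thesis by (rule measurable_restrict_space1)
qed

lemma bm_int:
  fixes f :: "real \<Rightarrow> real"
  assumes "f \<in> borel_measurable borel" "\<And>x. x \<in> {a..b} \<Longrightarrow> \<bar>f x\<bar> \<le> M"
  shows "f integrable_on {a..b}"
proof (rule measurable_bounded_by_integrable_imp_integrable_real[of f "{a..b}" "\<lambda>_. M"])
  show "f \<in> borel_measurable (lebesgue_on {a..b})" by (rule bm_lebesgue_on[OF assms(1)])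
  show "(\<lambda>_. M) integrable_on {a..b}" by (rule integrable_const_ivl)
  show "\<And>x. x \<in> {a..b} \<Longrightarrow> \<bar>f x\<bar> \<le> M" by (rule assms(2))
  show "{a..b} \<in> sets lebesgue" by simp
qed

context FE
begin

lemma G_meas [measurable]:
  assumes [measurable]: "f \<in> borel_measurable borel" "g \<in> borel_measurable borel"
  shows "(\<lambda>x. Gc (f x) (g x)) \<in> borel_measurable borel"
  unfolding Gf_def by measurable

lemma G_bound:
  assumes "0 < c" "c \<le> d"
  shows "\<exists>M. \<forall>u\<in>{c..d}. \<forall>v\<in>{c..d}. \<bar>Gc u v\<bar> \<le> M"
proof -
  have cc: "c * c \<le> d * d" using assms by (intro mult_mono) auto
  have cd: "c * d \<le> d * d" using assms by (intro mult_right_mono) auto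
  have ab: "0 < c/(2*d)" "c/(2*d) \<le> d/(c+d)" "d/(c+d) < 1"
  proof -
    have key: "c * c + c * d \<le> d * (d * 2)" using cc cd by linarith
    show "0 < c/(2*d)" using assms by simp
    show "c/(2*d) \<le> d/(c+d)" using assms key by (simp add: field_simps)
    show "d/(c+d) < 1" using assms by simp
  qed
  obtain M0 where M0: "\<forall>x\<in>{c/(2*d)..d/(c+d)}. \<bar>H x\<bar> \<le> M0"
    using local_bound[OF ab] by blast
  have "\<bar>Gc u v\<bar> \<le> (2*d) powr \<alpha> * M0" if "u \<in> {c..d}" "v \<in> {c..d}" for u v
  proof -
    have uv: "0 < u + v" "u + v \<le> 2*d" using that assms by auto
    have k1: "c * u \<le> v * d" using that assms by (intro mult_mono) auto
    have k2: "c * v \<le> d * v" using that assms by (intro mult_right_mono) auto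
    have k3: "c * v \<le> u * d" using that assms by (intro mult_mono) auto
    have e2: "d * (v * 2) = v * d + d * v" by (simp add: algebra_simps)
    have g1: "c * u + c * v \<le> d * (v * 2)" unfolding e2 using k1 k2 by linarith
    have g2: "c * v \<le> d * u" using k3 by (simp add: mult.commute)
    have r: "v/(u+v) \<in> {c/(2*d)..d/(c+d)}"
      using that assms g1 g2 by (auto simp: field_simps)
    have hb: "\<bar>H (v/(u+v))\<bar> \<le> M0" using M0 r by blast
    have p: "(u+v) powr \<alpha> \<le> (2*d) powr \<alpha>" using uv apos by (intro powr_mono2) auto
    have "\<bar>Gc u v\<bar> = (u+v) powr \<alpha> * \<bar>H (v/(u+v))\<bar>" using uv by (simp add: Gf_def abs_mult)
    also have "\<dots> \<le> (2*d) powr \<alpha> * M0"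
      using hb p by (intro mult_mono) auto
    finally show ?thesis .
  qed
  then show ?thesis by blast
qed

lemma G_int:
  fixes f g :: "real \<Rightarrow> real"
  assumes [measurable]: "f \<in> borel_measurable borel" "g \<in> borel_measurable borel"
    and "0 < c" "c \<le> d" "\<And>x. x \<in> {a..b} \<Longrightarrow> f x \<in> {c..d} \<and> g x \<in> {c..d}"
  shows "(\<lambda>x. Gc (f x) (g x)) integrable_on {a..b}"
proof -
  obtain M where M: "\<forall>u\<in>{c..d}. \<forall>v\<in>{c..d}. \<bar>Gc u v\<bar> \<le> M" using G_bound assms by blast
  show ?thesis by (rule bm_int[where M=M]) (use assms M in auto)
qed

definition "Psi x = integral {1..2} (\<lambda>w. Gc x w)"
definition "Qf x = integral {0..x} (\<lambda>s. Gc (1 + s) 1)"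
definition "phi x = Qf x - Psi x"

lemma G_cob:
  assumes u: "1 \<le> u" and v: "1 \<le> v"
  shows "Gc u v = phi (u+v) - phi u - phi v"
proof -
  define D where "D = u + v + 2"
  have D: "1 \<le> D" using u v by (simp add: D_def)
  have i1: "(\<lambda>w. Gc (u+v) w) integrable_on {1..2}"
    apply (rule G_int[where c=1 and d=D])
    apply measurable
    using u v D_def by auto
  have i2: "(\<lambda>w. Gc u (v+w)) integrable_on {1..2}"
    apply (rule G_int[where c=1 and d=D])
    apply measurable
    using u v D_def by auto
  have i3: "(\<lambda>w. Gc v w) integrable_on {1..2}"
    apply (rule G_int[where c=1 and d=D])
    apply measurable
    using u v D_def by auto
  have i4: "(\<lambda>s. Gc u s) integrable_on {1..2+v}"
    apply (rule G_int[where c=1 and d=D])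
    apply measurable
    using u v D_def by auto
  have i5: "(\<lambda>s. Gc u (2+s)) integrable_on {0..v}"
    apply (rule G_int[where c=1 and d=D])
    apply measurable
    using u v D_def by auto
  have i6: "(\<lambda>s. Gc u (1+s)) integrable_on {0..v}"
    apply (rule G_int[where c=1 and d=D])
    apply measurable
    using u v D_def by auto
  have i7: "(\<lambda>s. Gc (u+(1+s)) 1) integrable_on {0..v}"
    apply (rule G_int[where c=1 and d=D])
    apply measurable
    using u v D_def by auto
  have i8: "(\<lambda>s. Gc (1+s) 1) integrable_on {0..v}"
    apply (rule G_int[where c=1 and d=D])
    apply measurable
    using u v D_def by auto
  have i9: "(\<lambda>s. Gc (1+s) 1) integrable_on {0..u+v}"
    apply (rule G_int[where c=1 and d=D])
    apply measurable
    using u v D_def by auto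
  have "integral {1..2} (\<lambda>w. Gc u v + Gc (u+v) w) = integral {1..2} (\<lambda>w. Gc u (v+w) + Gc v w)"
    by (rule integral_cong) (use u v cocycle in auto)
  moreover have "integral {1..2} (\<lambda>w. Gc u v + Gc (u+v) w) = integral {1..2} (\<lambda>w::real. Gc u v) + integral {1..2} (\<lambda>w. Gc (u+v) w)"
    by (rule integral_add[OF integrable_const_ivl i1])
  moreover have "integral {1..2} (\<lambda>w. Gc u (v+w) + Gc v w) = integral {1..2} (\<lambda>w. Gc u (v+w)) + integral {1..2} (\<lambda>w. Gc v w)"
    by (rule integral_add[OF i2 i3])
  moreover have "integral {1..2} (\<lambda>w::real. Gc u v) = Gc u v" by simp
  ultimately have s1: "Gc u v + Psi (u+v) = integral {1..2} (\<lambda>w. Gc u (v+w)) + Psi v"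
    unfolding Psi_def by linarith
  have s2: "integral {1..2} (\<lambda>w. Gc u (v+w)) = integral {1+v..2+v} (\<lambda>s. Gc u s)"
    using integral_shift_Icc_real[of 1 2 "\<lambda>s. Gc u s" v] by (simp add: o_def)
  have c1: "integral {1..2} (\<lambda>s. Gc u s) + integral {2..2+v} (\<lambda>s. Gc u s) = integral {1..2+v} (\<lambda>s. Gc u s)"
    by (rule Henstock_Kurzweil_Integration.integral_combine) (use v i4 in auto)
  have c2: "integral {1..1+v} (\<lambda>s. Gc u s) + integral {1+v..2+v} (\<lambda>s. Gc u s) = integral {1..2+v} (\<lambda>s. Gc u s)"
    by (rule Henstock_Kurzweil_Integration.integral_combine) (use v i4 in auto)
  have t1: "integral {2..2+v} (\<lambda>s. Gc u s) = integral {0..v} (\<lambda>s. Gc u (2+s))"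
    using integral_shift_Icc_real[of 0 v "\<lambda>s. Gc u s" 2] by (simp add: o_def add.commute)
  have t2: "integral {1..1+v} (\<lambda>s. Gc u s) = integral {0..v} (\<lambda>s. Gc u (1+s))"
    using integral_shift_Icc_real[of 0 v "\<lambda>s. Gc u s" 1] by (simp add: o_def add.commute)
  have "integral {0..v} (\<lambda>s. Gc u (2+s)) - integral {0..v} (\<lambda>s. Gc u (1+s))
      = integral {0..v} (\<lambda>s. Gc u (2+s) - Gc u (1+s))"
    using i5 i6 by (simp add: integral_diff)
  also have "\<dots> = integral {0..v} (\<lambda>s. Gc (u+(1+s)) 1 - Gc (1+s) 1)"
  proof (rule integral_cong)
    fix s assume s: "s \<in> {0..v}"
    have "Gc u (1+s) + Gc (u+(1+s)) 1 = Gc u ((1+s)+1) + Gc (1+s) 1"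
      by (rule cocycle) (use u s in auto)
    moreover have "(1+s)+1 = 2+s" by simp
    ultimately show "Gc u (2+s) - Gc u (1+s) = Gc (u+(1+s)) 1 - Gc (1+s) 1" by simp
  qed
  also have "\<dots> = integral {0..v} (\<lambda>s. Gc (u+(1+s)) 1) - Qf v"
    using i7 i8 by (simp add: integral_diff Qf_def)
  finally have s4: "integral {0..v} (\<lambda>s. Gc u (2+s)) - integral {0..v} (\<lambda>s. Gc u (1+s))
      = integral {0..v} (\<lambda>s. Gc (u+(1+s)) 1) - Qf v" .
  have t3: "integral {0..v} (\<lambda>s. Gc (u+(1+s)) 1) = integral {u..u+v} (\<lambda>s. Gc (1+s) 1)"
  proof -
    have "integral {0..v} (\<lambda>s. Gc (u+(1+s)) 1) = integral {0..v} ((\<lambda>s. Gc (1+s) 1) \<circ> (+) u)"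
      by (rule integral_cong) (simp add: algebra_simps)
    also have "\<dots> = integral {0+u..v+u} (\<lambda>s. Gc (1+s) 1)" by (rule integral_shift_Icc_real)
    finally show ?thesis by (simp add: add.commute)
  qed
  have c3: "integral {0..u} (\<lambda>s. Gc (1+s) 1) + integral {u..u+v} (\<lambda>s. Gc (1+s) 1) = Qf (u+v)"
    unfolding Qf_def by (rule Henstock_Kurzweil_Integration.integral_combine) (use u v i9 in auto)
  have "Psi u = integral {1..2} (\<lambda>s. Gc u s)" by (simp add: Psi_def)
  then show ?thesis
    using s1 s2 c1 c2 t1 t2 s4 t3 c3 unfolding phi_def Qf_def[of u] by linarith
qed

end


context FE
begin

lemma G_sym:
  assumes "0 \<le> u" "0 \<le> v"
  shows "Gc u v = Gc v u"
proof (cases "u = 0 \<or> v = 0")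
  case True
  then show ?thesis
  proof
    assume "u = 0" then show ?thesis using G_zero1[OF assms(2)] G_zero2[OF assms(2)] by simp
  next
    assume "v = 0" then show ?thesis using G_zero1[OF assms(1)] G_zero2[OF assms(1)] by simp
  qed
next
  case False
  then have uv: "0 < u" "0 < v" using assms by auto
  define t where "t = 1/u + 1/v"
  have t: "t > 0" using uv unfolding t_def by (intro add_pos_pos) auto
  have "t * u = 1 + u/v" using uv by (simp add: t_def distrib_right)
  then have tu: "1 \<le> t * u" using uv by simp
  have "t * v = v/u + 1" using uv by (simp add: t_def distrib_right)
  then have tv: "1 \<le> t * v" using uv by simp
  have g1: "Gc (t * u) (t * v) = phi (t * u + t * v) - phi (t * u) - phi (t * v)" by (rule G_cob[OF tu tv])
  have g2: "Gc (t * v) (t * u) = phi (t * u + t * v) - phi (t * v) - phi (t * u)"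
    using G_cob[OF tv tu] by (metis add.commute)
  have "Gc (t * u) (t * v) = Gc (t * v) (t * u)" using g1 g2 by linarith
  moreover have "Gc (t * u) (t * v) = t powr \<alpha> * Gc u v" by (rule G_homog[OF t assms])
  moreover have "Gc (t * v) (t * u) = t powr \<alpha> * Gc v u" by (rule G_homog[OF t assms(2) assms(1)])
  ultimately have e: "t powr \<alpha> * Gc u v = t powr \<alpha> * Gc v u" by linarith
  have "t powr \<alpha> \<noteq> 0" using t by simp
  then show ?thesis using e mult_left_cancel[of "t powr \<alpha>" "Gc u v" "Gc v u"] by blast
qed

lemma double_identity:
  assumes "0 \<le> u" "0 \<le> v"
  shows "Gc (u+u) (v+v) + Gc u u + Gc v v = 2 * Gc u v + Gc (u+v) (u+v)"
proof -
  have c1: "Gc (u+u) v + Gc (u+u+v) v = Gc (u+u) (v+v) + Gc v v"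
    using cocycle[of "u+u" v v] assms by simp
  have c2: "Gc u u + Gc (u+u) v = Gc u (u+v) + Gc u v"
    using cocycle[of u u v] assms by simp
  have c3: "Gc (u+v) u + Gc (u+u+v) v = Gc (u+v) (u+v) + Gc u v"
    using cocycle[of "u+v" u v] assms by (simp add: ac_simps)
  have s: "Gc u (u+v) = Gc (u+v) u" using G_sym assms by simp
  show ?thesis using c1 c2 c3 s by linarith
qed

lemma s_alpha_sym: "s_alpha a (1 - x) = s_alpha a x"
  by (simp add: s_alpha_def algebra_simps)

lemma alg1:
  fixes K P Q D a :: real
  assumes "a \<noteq> 1" "D \<noteq> 0"
  shows "(K - P * K - Q * K) / D = K * (a - 1) / D * ((P + Q - 1) / (1 - a))"
proof -
  have "1 - a \<noteq> 0" using assms by simp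
  then show ?thesis using assms by (simp add: field_simps)
qed

lemma case_ne1:
  assumes a1: "\<alpha> \<noteq> 1"
  shows "\<exists>c. \<forall>x\<in>{0..1}. H x = c * s_alpha \<alpha> x"
proof -
  define K where "K = Gc 1 1"
  have p2: "2 powr \<alpha> \<noteq> 2"
  proof
    assume "2 powr \<alpha> = 2"
    then have "2 powr \<alpha> = 2 powr (1::real)" by simp
    then have "\<alpha> = 1" using powr_inj[of 2 \<alpha> 1] by simp
    then show False using a1 by simp
  qed
  define c where "c = K * (\<alpha> - 1) / (2 powr \<alpha> - 2)"
  have "H x = c * s_alpha \<alpha> x" if x: "x \<in> {0..1}" for x
  proof (cases "x = 0 \<or> x = 1")
    case True
    have "s_alpha \<alpha> 0 = 0" "s_alpha \<alpha> 1 = 0" using apos by (simp_all add: s_alpha_def xlogx_def)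
    then show ?thesis using True H0 H1 by auto
  next
    case False
    then have x0: "0 < x" "x < 1" using x by auto
    have hw: "Gc w w = w powr \<alpha> * K" if "0 < w" for w
    proof -
      have "Gc (w * 1) (w * 1) = w powr \<alpha> * Gc 1 1" by (rule G_homog) (use that in auto)
      then show ?thesis by (simp add: K_def)
    qed
    have e: "Gc (1-x+(1-x)) (x+x) + Gc (1-x) (1-x) + Gc x x = 2 * Gc (1-x) x + Gc (1-x+x) (1-x+x)"
      by (rule double_identity) (use x0 in auto)
    have q5: "Gc (1-x) x = H x" by (rule G_sum1) (use x0 in auto)
    have q1: "Gc (1-x+(1-x)) (x+x) = 2 powr \<alpha> * H x"
    proof -
      have "Gc (2 * (1-x)) (2 * x) = 2 powr \<alpha> * Gc (1-x) x" by (rule G_homog) (use x0 in auto)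
      moreover have "2 * (1-x) = 1-x+(1-x)" "2 * x = x+x" by simp_all
      ultimately show ?thesis using q5 by metis
    qed
    have q2: "Gc (1-x) (1-x) = (1-x) powr \<alpha> * K" by (rule hw) (use x0 in auto)
    have q3: "Gc x x = x powr \<alpha> * K" by (rule hw) (use x0 in auto)
    have q4: "Gc (1-x+x) (1-x+x) = K" by (simp add: K_def)
    have q6: "2 powr \<alpha> * H x + (1-x) powr \<alpha> * K + x powr \<alpha> * K = 2 * H x + K"
      using e q1 q2 q3 q4 q5 by linarith
    have q7: "(2 powr \<alpha> - 2) * H x = 2 powr \<alpha> * H x - 2 * H x" by (rule left_diff_distrib)
    have q8: "(2 powr \<alpha> - 2) * H x = K - x powr \<alpha> * K - (1-x) powr \<alpha> * K"
      using q6 q7 by linarith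
    have "H x = (K - x powr \<alpha> * K - (1-x) powr \<alpha> * K) / (2 powr \<alpha> - 2)"
      using q8 p2 by (simp add: eq_divide_eq mult.commute)
    also have "\<dots> = c * ((x powr \<alpha> + (1-x) powr \<alpha> - 1) / (1 - \<alpha>))"
      unfolding c_def by (rule alg1) (use a1 p2 in auto)
    also have "\<dots> = c * s_alpha \<alpha> x" using a1 by (simp add: s_alpha_def)
    finally show ?thesis .
  qed
  then show ?thesis by blast
qed

end


lemma absD1: "\<bar>a::real\<bar> \<le> M \<Longrightarrow> -M \<le> a" by (simp add: abs_le_iff)
lemma absD2: "\<bar>a::real\<bar> \<le> M \<Longrightarrow> a \<le> M" by (simp add: abs_le_iff)

lemma additive_lin:
  fixes f :: "real \<Rightarrow> real"
  assumes add: "\<And>x y. 1 \<le> x \<Longrightarrow> 1 \<le> y \<Longrightarrow> f (x+y) = f x + f y"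
    and bnd: "\<And>x. x \<in> {1..2} \<Longrightarrow> \<bar>f x\<bar> \<le> B"
    and x: "1 \<le> x"
  shows "f x = x * f 1"
proof -
  define D where "D x = f x - x * f 1" for x
  have Dadd: "D (x+y) = D x + D y" if "1 \<le> x" "1 \<le> y" for x y
    using add[OF that] by (simp add: D_def algebra_simps)
  have D1: "D 1 = 0" by (simp add: D_def)
  have Dshift: "D (x + real k) = D x" if "1 \<le> x" for x k
  proof (induction k)
    case 0 then show ?case by simp
  next
    case (Suc k)
    have "D (x + real (Suc k)) = D ((x + real k) + 1)" by (simp add: algebra_simps)
    also have "\<dots> = D (x + real k) + D 1" by (rule Dadd) (use that in auto)
    finally show ?case using Suc D1 by simp
  qed
  define B' where "B' = B + 2 * \<bar>f 1\<bar>"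
  have Db12: "\<bar>D y\<bar> \<le> B'" if "y \<in> {1..2}" for y
  proof -
    have "\<bar>D y\<bar> \<le> \<bar>f y\<bar> + \<bar>y * f 1\<bar>" by (simp add: D_def)
    also have "\<bar>y * f 1\<bar> \<le> 2 * \<bar>f 1\<bar>" using that by (simp add: abs_mult mult_right_mono)
    finally show ?thesis using bnd[OF that] by (simp add: B'_def)
  qed
  have Db: "\<bar>D z\<bar> \<le> B'" if z: "1 \<le> z" for z
  proof -
    define k where "k = nat (\<lfloor>z\<rfloor> - 1)"
    have fl: "1 \<le> \<lfloor>z\<rfloor>" using z by (simp add: le_floor_iff)
    have rk: "real k = real_of_int \<lfloor>z\<rfloor> - 1" using fl by (simp add: k_def)
    define y where "y = z - real k"
    have y: "y \<in> {1..2}" using rk of_int_floor_le[of z] real_of_int_floor_add_one_gt[of z]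
      unfolding y_def by (simp add: algebra_simps)
    have "D z = D (y + real k)" by (simp add: y_def)
    also have "\<dots> = D y" by (rule Dshift) (use y in auto)
    finally show ?thesis using Db12[OF y] by simp
  qed
  have Dmult: "D (real (Suc n) * z) = real (Suc n) * D z" if z: "1 \<le> z" for z n
  proof (induction n)
    case 0 then show ?case by simp
  next
    case (Suc n)
    have "D (real (Suc (Suc n)) * z) = D (real (Suc n) * z + z)" by (simp add: algebra_simps)
    also have "\<dots> = D (real (Suc n) * z) + D z"
    proof (rule Dadd)
      have "1 * 1 \<le> real (Suc n) * z" using z by (intro mult_mono) auto
      then show "1 \<le> real (Suc n) * z" by simp
    qed (use z in auto)
    finally show ?case using Suc by (simp add: algebra_simps)
  qed
  have "D x = 0"
  proof (rule ccontr)
    assume nz: "D x \<noteq> 0"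
    obtain n :: nat where n: "B' / \<bar>D x\<bar> < real n" using reals_Archimedean2 by blast
    have "real (Suc n) * \<bar>D x\<bar> > B'"
    proof -
      have "B' < real n * \<bar>D x\<bar>" using n nz by (simp add: divide_less_eq)
      also have "\<dots> \<le> real (Suc n) * \<bar>D x\<bar>" by (simp add: mult_right_mono)
      finally show ?thesis .
    qed
    moreover have "\<bar>D (real (Suc n) * x)\<bar> \<le> B'"
    proof (rule Db)
      have "1 * 1 \<le> real (Suc n) * x" using x by (intro mult_mono) auto
      then show "1 \<le> real (Suc n) * x" by simp
    qed
    ultimately show False using Dmult[OF x, of n] by (simp add: abs_mult)
  qed
  then show ?thesis by (simp add: D_def)
qed

context FE
begin

lemma phi_bound:
  assumes X: "1 \<le> X"
  shows "\<exists>M. \<forall>x\<in>{1..X}. \<bar>phi x\<bar> \<le> M"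
proof -
  obtain M1 where M1: "\<forall>u\<in>{1..X+2}. \<forall>v\<in>{1..X+2}. \<bar>Gc u v\<bar> \<le> M1"
    using G_bound[of 1 "X+2"] X by auto
  have M10: "0 \<le> M1" using M1 X by (meson abs_ge_zero atLeastAtMost_iff le_add_same_cancel1 order_trans zero_le_numeral linorder_not_le not_one_le_zero)
  have "\<bar>phi x\<bar> \<le> M1 + X * M1" if x: "x \<in> {1..X}" for x
  proof -
    have i1: "(\<lambda>w. Gc x w) integrable_on {1..2}"
      apply (rule G_int[where c=1 and d="X+2"])
      apply measurable
      using x by auto
    have b1: "\<bar>Gc x w\<bar> \<le> M1" if "w \<in> {1..2}" for w using M1 x that by auto
    have "integral {1..2} (\<lambda>w. Gc x w) \<le> integral {1..2} (\<lambda>w::real. M1)"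
      by (rule integral_le[OF i1 integrable_const_ivl]) (rule absD2, rule b1, assumption)
    moreover have "integral {1..2} (\<lambda>w::real. -M1) \<le> integral {1..2} (\<lambda>w. Gc x w)"
      by (rule integral_le[OF integrable_const_ivl i1]) (rule absD1, rule b1, assumption)
    ultimately have P: "\<bar>Psi x\<bar> \<le> M1" by (simp add: Psi_def abs_le_iff)
    have i2: "(\<lambda>s. Gc (1+s) 1) integrable_on {0..x}"
      apply (rule G_int[where c=1 and d="X+2"])
      apply measurable
      using x by auto
    have b2: "\<bar>Gc (1+s) 1\<bar> \<le> M1" if "s \<in> {0..x}" for s using M1 x that by auto
    have "integral {0..x} (\<lambda>s. Gc (1+s) 1) \<le> integral {0..x} (\<lambda>s::real. M1)"
      by (rule integral_le[OF i2 integrable_const_ivl]) (rule absD2, rule b2, assumption)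
    moreover have "integral {0..x} (\<lambda>s::real. -M1) \<le> integral {0..x} (\<lambda>s. Gc (1+s) 1)"
      by (rule integral_le[OF integrable_const_ivl i2]) (rule absD1, rule b2, assumption)
    ultimately have "\<bar>Qf x\<bar> \<le> x * M1" using x by (simp add: Qf_def abs_le_iff)
    also have "\<dots> \<le> X * M1" using x M10 by (intro mult_right_mono) auto
    finally have Q: "\<bar>Qf x\<bar> \<le> X * M1" .
    have "\<bar>phi x\<bar> \<le> \<bar>Qf x\<bar> + \<bar>Psi x\<bar>" unfolding phi_def by (rule abs_triangle_ineq4)
    then show ?thesis using P Q by linarith
  qed
  then show ?thesis by blast
qed

end


context FE
begin

lemma div_le:
  fixes p e :: real
  assumes "1 \<le> e"
  shows "\<bar>p / e\<bar> \<le> \<bar>p\<bar>"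
proof -
  have "\<bar>p / e\<bar> = \<bar>p\<bar> / e" using assms by (simp add: abs_divide)
  also have "\<dots> \<le> \<bar>p\<bar> / 1" by (rule divide_left_mono) (use assms in auto)
  finally show ?thesis by simp
qed

lemma case_eq1:
  assumes a1: "\<alpha> = 1"
  shows "\<exists>c. \<forall>x\<in>{0..1}. H x = c * s_alpha \<alpha> x"
proof -
  have hom1: "Gc (t * u) (t * v) = t * Gc u v" if "t > 0" "u \<ge> 0" "v \<ge> 0" for t u v
    using G_homog[OF that] that a1 by simp
  have one_le: "1 \<le> a * b" if "1 \<le> a" "1 \<le> b" for a b :: real
  proof -
    have "1 * 1 \<le> a * b" using that by (intro mult_mono) auto
    then show ?thesis by simp
  qed
  have lin: "phi (t * x) = t * phi x + x * (phi t - t * phi 1)" if t: "1 \<le> t" and x: "1 \<le> x" for t x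
  proof -
    define A where "A y = phi (t * y) - t * phi y" for y
    have Aadd: "A (y + z) = A y + A z" if y: "1 \<le> y" and z: "1 \<le> z" for y z
    proof -
      have g1: "Gc (t * y) (t * z) = phi (t * y + t * z) - phi (t * y) - phi (t * z)"
        by (rule G_cob) (use one_le t y z in auto)
      have g2: "Gc (t * y) (t * z) = t * Gc y z" by (rule hom1) (use t y z in auto)
      have g3: "Gc y z = phi (y + z) - phi y - phi z" by (rule G_cob[OF y z])
      have g4: "t * Gc y z = t * phi (y + z) - t * phi y - t * phi z" using g3 by (simp add: right_diff_distrib)
      have g5: "t * (y + z) = t * y + t * z" by (simp add: distrib_left)
      show ?thesis unfolding A_def g5 using g1 g2 g4 by linarith
    qed
    obtain M2 where M2: "\<forall>y\<in>{1..2*t}. \<bar>phi y\<bar> \<le> M2" using phi_bound[of "2*t"] t by auto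
    obtain M where M: "\<forall>y\<in>{1..2}. \<bar>phi y\<bar> \<le> M" using phi_bound[of 2] by auto
    have Ab: "\<bar>A y\<bar> \<le> M2 + t * M" if y: "y \<in> {1..2}" for y
    proof -
      have "t * y \<in> {1..2*t}" using y t one_le[of t y] by (auto intro: mult_left_mono)
      then have a: "\<bar>phi (t * y)\<bar> \<le> M2" using M2 by blast
      have b: "\<bar>phi y\<bar> \<le> M" using M y by blast
      have c: "\<bar>t * phi y\<bar> \<le> t * M" using b t by (simp add: abs_mult mult_left_mono)
      have "\<bar>A y\<bar> \<le> \<bar>phi (t * y)\<bar> + \<bar>t * phi y\<bar>" unfolding A_def by (rule abs_triangle_ineq4)
      then show ?thesis using a c by linarith
    qed
    have "A x = x * A 1" by (rule additive_lin[OF Aadd Ab x])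
    then show ?thesis by (simp add: A_def algebra_simps)
  qed
  define mu where "mu x = phi x / x - phi 1" for x
  have mu_mult: "mu (t * x) = mu t + mu x" if t: "1 \<le> t" and x: "1 \<le> x" for t x
  proof -
    have "mu (t * x) = (t * phi x + x * (phi t - t * phi 1)) / (t * x) - phi 1"
      by (simp add: mu_def lin[OF t x])
    also have "\<dots> = mu t + mu x" using t x by (simp add: mu_def field_simps)
    finally show ?thesis .
  qed
  define nu where "nu a = mu (exp a)" for a
  have exp1: "1 \<le> exp a" if "1 \<le> a" for a :: real using that by simp
  have nu_add: "nu (a + b) = nu a + nu b" if a: "1 \<le> a" and b: "1 \<le> b" for a b
    unfolding nu_def exp_add by (rule mu_mult) (use a b in auto)
  have e2: "1 \<le> exp (2::real)" by simp
  obtain M3 where M3: "\<forall>y\<in>{1..exp 2}. \<bar>phi y\<bar> \<le> M3" using phi_bound[OF e2] by blast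
  have nu_b: "\<bar>nu a\<bar> \<le> M3 + \<bar>phi 1\<bar>" if a: "a \<in> {1..2}" for a
  proof -
    have ea: "exp a \<in> {1..exp 2}" using a by auto
    have p: "\<bar>phi (exp a)\<bar> \<le> M3" using M3 ea by blast
    have "\<bar>phi (exp a) / exp a\<bar> \<le> \<bar>phi (exp a)\<bar>"
      by (rule div_le) (use ea in simp)
    then show ?thesis using p unfolding nu_def mu_def by linarith
  qed
  define cc where "cc = nu 1"
  have nu_lin: "nu a = a * cc" if "1 \<le> a" for a
    unfolding cc_def by (rule additive_lin[OF nu_add nu_b that])
  have mu_ln: "mu x = cc * ln x" if x: "1 \<le> x" for x
  proof -
    have x0: "0 < x" using x by simp
    have l: "ln (x * exp 1) = ln x + 1" using x0 by (simp add: ln_mult)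
    have lx: "0 \<le> ln x" using x by simp
    have "mu (x * exp 1) = mu x + mu (exp 1)" by (rule mu_mult) (use x in auto)
    moreover have "mu (x * exp 1) = nu (ln x + 1)"
      unfolding nu_def using x0 by (simp add: l[symmetric])
    moreover have "nu (ln x + 1) = (ln x + 1) * cc" by (rule nu_lin) (use lx in simp)
    moreover have "mu (exp 1) = cc" by (simp add: cc_def nu_def)
    ultimately show ?thesis by (simp add: algebra_simps)
  qed
  have phi_form: "phi x = x * (cc * ln x + phi 1)" if x: "1 \<le> x" for x
  proof -
    have "mu x = phi x / x - phi 1" by (simp add: mu_def)
    then show ?thesis using mu_ln[OF x] x by (simp add: field_simps)
  qed
  have G_form: "Gc u v = cc * ((u+v) * ln (u+v) - u * ln u - v * ln v)" if u: "1 \<le> u" and v: "1 \<le> v" for u v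
    using G_cob[OF u v] phi_form[OF u] phi_form[OF v] phi_form[of "u+v"] u v
    by (simp add: algebra_simps)
  have "H x = cc * s_alpha \<alpha> x" if x: "x \<in> {0..1}" for x
  proof (cases "x = 0 \<or> x = 1")
    case True
    have "s_alpha \<alpha> 0 = 0" "s_alpha \<alpha> 1 = 0" using a1 by (simp_all add: s_alpha_def xlogx_def)
    then show ?thesis using True H0 H1 by auto
  next
    case False
    then have x0: "0 < x" "x < 1" using x by auto
    define t where "t = 1 / (x * (1 - x))"
    have t0: "0 < t" using x0 by (simp add: t_def)
    have u: "t * (1 - x) = 1 / x" using x0 by (simp add: t_def field_simps)
    have v: "t * x = 1 / (1 - x)" using x0 by (simp add: t_def field_simps)
    have u1: "1 \<le> t * (1 - x)" unfolding u using x0 by simp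
    have v1: "1 \<le> t * x" unfolding v using x0 by simp
    have uv: "t * (1 - x) + t * x = t" by (simp add: algebra_simps)
    have h1: "Gc (t * (1 - x)) (t * x) = t * H x"
      using hom1[of t "1-x" x] t0 x0 G_sum1[of "1-x" x] by simp
    have lu: "ln (t * (1 - x)) = - ln x" unfolding u using x0 by (simp add: ln_div)
    have lv: "ln (t * x) = - ln (1 - x)" unfolding v using x0 by (simp add: ln_div)
    have lt: "ln t = - ln x - ln (1 - x)" unfolding t_def using x0 by (simp add: ln_div ln_mult)
    have "t * H x = cc * (t * ln t - t * (1 - x) * ln (t * (1 - x)) - t * x * ln (t * x))"
      using G_form[OF u1 v1] h1 uv by simp
    also have "\<dots> = t * (cc * (- (x * ln x) - (1 - x) * ln (1 - x)))"
      unfolding lu lv lt by (simp add: algebra_simps)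
    finally have "H x = cc * (- (x * ln x) - (1 - x) * ln (1 - x))" using t0 by simp
    then show ?thesis using x0 a1 by (simp add: s_alpha_def xlogx_def)
  qed
  then show ?thesis by blast
qed

lemma H_form: "\<exists>c. \<forall>x\<in>{0..1}. H x = c * s_alpha \<alpha> x"
  using case_eq1 case_ne1 by blast

end


theorem proposition4p10:
  fixes \<alpha> :: real and f1 f2 :: "real \<times> real \<Rightarrow> real"
  assumes "\<alpha> > 0"
    and "f1 \<in> borel_measurable (restrict_space borel simplex1)"
    and "f2 \<in> borel_measurable (restrict_space borel simplex1)"
    and "f1 (0, 1) = 0" and "f1 (1, 0) = 0"
    and "f2 (0, 1) = 0" and "f2 (1, 0) = 0"
    and "\<forall>(p0, p1, p2) \<in> simplex2.
           scaled_term \<alpha> f1 p2 p0 p1 - f1 (1 - p1, p1)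
         = scaled_term \<alpha> f2 p1 p0 p2 - f2 (1 - p2, p2)"
  shows "(\<forall>x \<in> simplex1. f1 x = f2 x) \<and>
         (\<exists>c::real. \<forall>p \<in> {0..1}. f1 (p, 1 - p) = c * s_alpha \<alpha> p)"
proof -
  note apos = assms(1) and m1 = assms(2) and b1 = assms(4,5) and b2 = assms(6,7)
  have E: "scaled_term \<alpha> f1 p2 p0 p1 - f1 (1 - p1, p1) = scaled_term \<alpha> f2 p1 p0 p2 - f2 (1 - p2, p2)"
    if "0 \<le> p0" "0 \<le> p1" "0 \<le> p2" "p0 + p1 + p2 = 1" for p0 p1 p2
  proof -
    have "(p0, p1, p2) \<in> simplex2" using that by (auto simp: simplex2_def)
    then show ?thesis using assms(8) by fastforce
  qed
  have rel: "f1 (1 - s, s) = f2 (s, 1 - s)" if s: "s \<in> {0..1}" for s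
  proof -
    have e: "scaled_term \<alpha> f1 (1-s) 0 s - f1 (1 - s, s) = scaled_term \<alpha> f2 s 0 (1-s) - f2 (1 - (1-s), 1-s)"
      using E[of 0 s "1-s"] s by auto
    have z1: "scaled_term \<alpha> f1 (1-s) 0 s = 0"
      using b1 by (cases "s = 0") (auto simp: scaled_term_def)
    have z2: "scaled_term \<alpha> f2 s 0 (1-s) = 0"
      using b2 by (cases "s = 1") (auto simp: scaled_term_def)
    show ?thesis using e z1 z2 by simp
  qed
  define H where "H x = indicator {0..1} x *\<^sub>R f1 (1 - x, x)" for x :: real
  have Hin: "H x = f1 (1 - x, x)" if "x \<in> {0..1}" for x using that by (simp add: H_def)
  have Hmeas: "H \<in> borel_measurable borel"
  proof -
    have "(\<lambda>x::real. (1 - x, x)) \<in> borel_measurable borel" by measurable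
    then have "(\<lambda>x::real. (1 - x, x)) \<in> measurable (restrict_space borel {0..1}) (restrict_space borel simplex1)"
      by (rule measurable_restrict_space3) (auto simp: simplex1_def)
    then have "(\<lambda>x. f1 (1 - x, x)) \<in> borel_measurable (restrict_space borel {0..1})"
      using m1 by (rule measurable_compose)
    then show ?thesis unfolding H_def by (subst (asm) borel_measurable_restrict_space_iff) auto
  qed
  have fe: "FE \<alpha> H"
  proof
    show "0 < \<alpha>" by (rule apos)
    show "H \<in> borel_measurable borel" by (rule Hmeas)
    show "H 0 = 0" using b1 by (simp add: H_def)
    show "H 1 = 0" using b1 by (simp add: H_def)
    fix p0 p1 p2 :: real
    assume p: "0 \<le> p0" "0 \<le> p1" "0 \<le> p2" "p0 + p1 + p2 = 1"
    have e: "scaled_term \<alpha> f1 p2 p0 p1 - f1 (1 - p1, p1) = scaled_term \<alpha> f2 p1 p0 p2 - f2 (1 - p2, p2)"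
      by (rule E[OF p])
    have a1: "Gf \<alpha> H p0 p1 = scaled_term \<alpha> f1 p2 p0 p1"
    proof (cases "p2 = 1")
      case True
      then have "p0 = 0" "p1 = 0" using p by auto
      then show ?thesis using True by (simp add: Gf_def scaled_term_def)
    next
      case False
      have s: "p0 + p1 = 1 - p2" using p by simp
      have pos: "0 < 1 - p2" using p False by simp
      have r: "p1 / (1 - p2) \<in> {0..1}" using p pos by (auto simp: s[symmetric] divide_le_eq_1)
      have q: "1 - p1 / (1 - p2) = p0 / (1 - p2)" using pos by (simp add: s[symmetric] field_simps)
      show ?thesis using False pos by (simp add: Gf_def scaled_term_def s Hin[OF r] q)
    qed
    have a2: "Gf \<alpha> H (p0 + p2) p1 = f1 (1 - p1, p1)"
    proof -
      have "p0 + p2 + p1 = 1" using p by simp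
      moreover have "p1 \<in> {0..1}" using p by simp
      ultimately show ?thesis by (simp add: Gf_def Hin)
    qed
    have a3: "Gf \<alpha> H p2 p0 = scaled_term \<alpha> f2 p1 p0 p2"
    proof (cases "p1 = 1")
      case True
      then have "p0 = 0" "p2 = 0" using p by auto
      then show ?thesis using True by (simp add: Gf_def scaled_term_def)
    next
      case False
      have s: "p2 + p0 = 1 - p1" using p by simp
      have pos: "0 < 1 - p1" using p False by simp
      have r: "p0 / (1 - p1) \<in> {0..1}" using p pos by (auto simp: s[symmetric] divide_le_eq_1)
      have q: "1 - p0 / (1 - p1) = p2 / (1 - p1)" using pos by (simp add: s[symmetric] field_simps)
      have "H (p0 / (1 - p1)) = f2 (p0 / (1 - p1), p2 / (1 - p1))"
        using Hin[OF r] rel[OF r] q by simp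
      then show ?thesis using False pos by (simp add: Gf_def scaled_term_def s)
    qed
    have a4: "Gf \<alpha> H p2 (p0 + p1) = f2 (1 - p2, p2)"
    proof -
      have sm: "p2 + (p0 + p1) = 1" using p by simp
      have r: "p0 + p1 \<in> {0..1}" using p by simp
      have g: "Gf \<alpha> H p2 (p0 + p1) = H (p0 + p1)" by (simp add: Gf_def sm)
      have q1: "1 - (p0 + p1) = p2" using p by simp
      have q2: "p0 + p1 = 1 - p2" using p by simp
      have "H (p0 + p1) = f2 (p0 + p1, 1 - (p0 + p1))" using rel[OF r] Hin[OF r] by simp
      then show ?thesis unfolding g q1 using q2 by simp
    qed
    show "Gf \<alpha> H p0 p1 - Gf \<alpha> H (p0 + p2) p1 = Gf \<alpha> H p2 p0 - Gf \<alpha> H p2 (p0 + p1)"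
      using e a1 a2 a3 a4 by simp
  qed
  obtain c where c: "\<forall>x\<in>{0..1}. H x = c * s_alpha \<alpha> x"
    using FE.H_form[OF fe] by blast
  have sym: "s_alpha \<alpha> (1 - x) = s_alpha \<alpha> x" for x by (simp add: s_alpha_def algebra_simps)
  have part1: "\<forall>x \<in> simplex1. f1 x = f2 x"
  proof
    fix x assume x: "x \<in> simplex1"
    obtain a b where ab: "x = (a, b)" by (cases x)
    have ab1: "a \<in> {0..1}" "b \<in> {0..1}" "b = 1 - a" using x ab by (auto simp: simplex1_def)
    have "f1 x = f1 (1 - b, b)" using ab ab1 by simp
    also have "\<dots> = H b" using Hin[OF ab1(2)] by simp
    also have "\<dots> = c * s_alpha \<alpha> b" using c ab1(2) by blast
    also have "\<dots> = c * s_alpha \<alpha> a" using ab1 sym by simp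
    also have "\<dots> = H a" using c ab1(1) by simp
    also have "\<dots> = f1 (1 - a, a)" using Hin[OF ab1(1)] by simp
    also have "\<dots> = f2 (a, 1 - a)" using rel ab1 by simp
    also have "\<dots> = f2 x" using ab ab1 by simp
    finally show "f1 x = f2 x" .
  qed
  have part2: "\<forall>p \<in> {0..1}. f1 (p, 1 - p) = c * s_alpha \<alpha> p"
  proof
    fix p :: real assume p: "p \<in> {0..1}"
    have p1: "1 - p \<in> {0..1}" using p by simp
    have "f1 (p, 1 - p) = f1 (1 - (1 - p), 1 - p)" by simp
    also have "\<dots> = c * s_alpha \<alpha> (1 - p)" using c Hin[OF p1] p1 by auto
    also have "\<dots> = c * s_alpha \<alpha> p" using sym by simp
    finally show "f1 (p, 1 - p) = c * s_alpha \<alpha> p" .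
  qed
  show ?thesis using part1 part2 by blast
qed

end
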